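(* Let $G$ be a finite group whose prime graph $\Pi(G)$ has no edges, i.e. $G$ contains no element whose order is a product of two distinct primes. Then $P(G)$ is a cograph.
   Context: The prime graph (Gruenberg--Kegel graph) $\Pi(G)$ of a finite group $G$ has as vertices the prime divisors of $|G|$, with distinct primes $p,q$ adjacent if and only if $G$ contains an element of order $pq$. The power graph $P(G)$ has vertex set $G$, with distinct $u,v$ adjacent if and only if $u=v^i$ or $v=u^j$ for some integers $i,j$. A cograph is a graph with no induced subgraph isomorphic to the path $P_4$ on four vertices. *)

theory Defs
  imports "HOL-Algebra.Algebra" "HOL-Computational_Algebra.Primes"
begin

definition prime_graph_adj :: "('a, 'b) monoid_scheme \<Rightarrow> nat \<Rightarrow> nat \<Rightarrow> bool" where
  "prime_graph_adj G p q \<longleftrightarrow>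
     Factorial_Ring.prime p \<and> Factorial_Ring.prime q \<and> p \<noteq> q \<and> p dvd order G \<and> q dvd order G \<and>
     (\<exists>x\<in>carrier G. group.ord G x = p * q)"

definition power_graph_adj :: "('a, 'b) monoid_scheme \<Rightarrow> 'a \<Rightarrow> 'a \<Rightarrow> bool" where
  "power_graph_adj G u v \<longleftrightarrow>
     u \<in> carrier G \<and> v \<in> carrier G \<and> u \<noteq> v \<and>
     ((\<exists>i::int. u = v [^]\<^bsub>G\<^esub> i) \<or> (\<exists>j::int. v = u [^]\<^bsub>G\<^esub> j))"

definition cograph :: "'v set \<Rightarrow> ('v \<Rightarrow> 'v \<Rightarrow> bool) \<Rightarrow> bool" where
  "cograph V E \<longleftrightarrow>
     \<not> (\<exists>a\<in>V. \<exists>b\<in>V. \<exists>c\<in>V. \<exists>d\<in>V.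
          distinct [a, b, c, d] \<and>
          E a b \<and> E b c \<and> E c d \<and>
          \<not> E a c \<and> \<not> E b d \<and> \<not> E a d)"

end

theory Submission
  imports Defs
begin

context group begin

lemma pw_trans:
  assumes "w \<in> carrier G" "v = w [^] (i::int)" "u = v [^] (j::int)"
  shows "\<exists>k::int. u = w [^] k"
proof -
  have "u = w [^] (i * j)" using assms by (simp add: int_pow_pow)
  then show ?thesis by blast
qed

lemma pw_gcd0:
  assumes b: "b \<in> carrier G" and a: "a = b [^] (i::int)"
    and gi: "g dvd i" and uv: "u * i + v * int (ord b) = g"
  shows "(\<exists>k::int. a = (b [^] g) [^] k) \<and> (\<exists>k::int. b [^] g = a [^] k)"
proof
  from gi obtain t where t: "i = g * t" by blast
  have "a = (b [^] g) [^] t" using a b t by (simp add: int_pow_pow)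
  then show "\<exists>k::int. a = (b [^] g) [^] k" by blast
next
  have "i * u - g = int (ord b) * (- v)" using uv by (simp add: algebra_simps)
  then have "int (ord b) dvd (i * u - g)" by (metis dvd_triv_left)
  then have "b [^] g = b [^] (i * u)" using int_pow_eq[OF b] by simp
  also have "\<dots> = a [^] u" using a b by (simp add: int_pow_pow mult.assoc)
  finally show "\<exists>k::int. b [^] g = a [^] k" by blast
qed

lemma pw_gcd:
  assumes b: "b \<in> carrier G" and a: "a = b [^] (i::int)"
  shows "\<exists>g. g \<ge> 0 \<and> g dvd int (ord b) \<and> (\<exists>k::int. a = (b [^] g) [^] k) \<and> (\<exists>k::int. b [^] g = a [^] k)"
proof -
  obtain u v where uv: "u * i + v * int (ord b) = gcd i (int (ord b))" using bezout_int by blast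
  show ?thesis
    apply (rule exI[of _ "gcd i (int (ord b))"])
    using pw_gcd0[OF b a _ uv] by simp
qed

lemma pw_chain:
  assumes b: "b \<in> carrier G" and p: "Factorial_Ring.prime p" and ob: "ord b = p ^ n"
    and a: "a = b [^] (i::int)" and c: "c = b [^] (j::int)"
  shows "(\<exists>k::int. a = c [^] k) \<or> (\<exists>k::int. c = a [^] k)"
proof -
  obtain g where g: "g \<ge> 0" "g dvd int (ord b)" and ga1: "\<exists>k::int. a = (b [^] g) [^] k"
      and ga2: "\<exists>k::int. b [^] g = a [^] k"
    using pw_gcd[OF b a] by blast
  obtain h where h: "h \<ge> 0" "h dvd int (ord b)" and hc1: "\<exists>k::int. c = (b [^] h) [^] k"
      and hc2: "\<exists>k::int. b [^] h = c [^] k"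
    using pw_gcd[OF b c] by blast
  obtain g' h' where g': "g = int g'" and h': "h = int h'" using g h nonneg_int_cases by metis
  have "g' dvd p ^ n" using g g' ob by (metis of_nat_dvd_iff of_nat_power)
  then obtain r where r: "g' = p ^ r" using divides_primepow_nat[OF p] by blast
  have "h' dvd p ^ n" using h h' ob by (metis of_nat_dvd_iff of_nat_power)
  then obtain s where s: "h' = p ^ s" using divides_primepow_nat[OF p] by blast
  have "g' dvd h' \<or> h' dvd g'"
  proof (cases "r \<le> s")
    case True then show ?thesis using r s le_imp_power_dvd by blast
  next
    case False then show ?thesis using r s le_imp_power_dvd[of s r p] by simp
  qed
  then have "g dvd h \<or> h dvd g" using g' h' by simp
  then show ?thesis
  proof
    assume "g dvd h"
    then obtain t where t: "h = g * t" by blast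
    have bg: "b [^] g \<in> carrier G" using b by simp
    from hc1 obtain k :: int where "c = (b [^] h) [^] k" by blast
    then have "c = (b [^] g) [^] (t * k)" using t b by (simp add: int_pow_pow mult.assoc)
    moreover from ga2 obtain k' :: int where "b [^] g = a [^] k'" by blast
    ultimately have "c = a [^] (k' * (t * k))" using a b by (simp add: int_pow_pow mult.assoc)
    then show ?thesis by blast
  next
    assume "h dvd g"
    then obtain t where t: "g = h * t" by blast
    from ga1 obtain k :: int where "a = (b [^] g) [^] k" by blast
    then have "a = (b [^] h) [^] (t * k)" using t b by (simp add: int_pow_pow mult.assoc)
    moreover from hc2 obtain k' :: int where "b [^] h = c [^] k'" by blast
    ultimately have "a = c [^] (k' * (t * k))" using c b by (simp add: int_pow_pow mult.assoc)
    then show ?thesis by blast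
  qed
qed

lemma ord_primepow:
  assumes fin: "finite (carrier G)" and x: "x \<in> carrier G"
    and H: "\<forall>p q. \<not> prime_graph_adj G p q"
  shows "\<exists>p n. Factorial_Ring.prime p \<and> ord x = p ^ n"
proof (cases "ord x = 1")
  case True
  then show ?thesis by (intro exI[of _ 2] exI[of _ 0]) simp
next
  case False
  have pos: "ord x > 0" using ord_ge_1[OF fin x] by simp
  obtain p where p: "Factorial_Ring.prime p" "p dvd ord x" using prime_factor_nat[OF False] by blast
  obtain y where y: "ord x = p ^ multiplicity p (ord x) * y" "\<not> p dvd y"
    apply (rule multiplicity_decompose'[of "ord x" p])
    using pos p by (auto simp: prime_def)
  show ?thesis
  proof (cases "y = 1")
    case True
    then show ?thesis using y p by auto
  next
    case False
    obtain q where q: "Factorial_Ring.prime q" "q dvd y" using prime_factor_nat[OF False] by blast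
    have qx: "q dvd ord x" by (subst y(1)) (rule dvd_mult[OF q(2)])
    have pq: "p \<noteq> q" using q y by auto
    have "p * q dvd ord x"
      using p qx pq q by (simp add: divides_mult primes_coprime)
    then obtain m where m: "ord x = p * q * m" by blast
    have m0: "m \<noteq> 0" using m pos by auto
    have "ord (x [^] m) = ord x div m" using ord_pow[OF x _ m0] m by simp
    also have "\<dots> = p * q" using m m0 by simp
    finally have ordpq: "ord (x [^] m) = p * q" .
    have og: "ord x dvd order G" using ord_dvd_group_order[OF x] .
    have xm: "x [^] m \<in> carrier G" using x by simp
    have "prime_graph_adj G p q"
      unfolding prime_graph_adj_def
      using p q pq dvd_trans[OF p(2) og] dvd_trans[OF qx og] ordpq xm by blast
    then show ?thesis using H by blast
  qed
qed

end

theorem mainTheorem6: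
  fixes G :: "('a, 'b) monoid_scheme"
  assumes "group G"
    and "finite (carrier G)"
    and "\<forall>p q. \<not> prime_graph_adj G p q"
  shows "cograph (carrier G) (power_graph_adj G)"
proof -
  interpret group G by fact
  define P where "P = (\<lambda>u v. \<exists>i::int. u = v [^]\<^bsub>G\<^esub> i)"
  have ch: "P a c \<or> P c a" if b: "b \<in> carrier G" and ab: "P a b" and cb: "P c b" for a b c
  proof -
    from ab obtain i where i: "a = b [^]\<^bsub>G\<^esub> (i::int)" unfolding P_def by blast
    from cb obtain j where j: "c = b [^]\<^bsub>G\<^esub> (j::int)" unfolding P_def by blast
    obtain p n where "Factorial_Ring.prime p" "ord b = p ^ n"
      using ord_primepow[OF assms(2) b assms(3)] by blast
    from pw_chain[OF b this i j] show ?thesis unfolding P_def .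
  qed
  have tr: "P u w" if "w \<in> carrier G" "P u v" "P v w" for u v w
  proof -
    from that obtain i j where "v = w [^]\<^bsub>G\<^esub> (i::int)" "u = v [^]\<^bsub>G\<^esub> (j::int)" unfolding P_def by blast
    from pw_trans[OF that(1) this] show ?thesis unfolding P_def .
  qed
  have adj: "power_graph_adj G u v \<longleftrightarrow> u \<in> carrier G \<and> v \<in> carrier G \<and> u \<noteq> v \<and> (P u v \<or> P v u)" for u v
    unfolding power_graph_adj_def P_def by simp
  show ?thesis
    unfolding cograph_def
  proof
    assume "\<exists>a\<in>carrier G. \<exists>b\<in>carrier G. \<exists>c\<in>carrier G. \<exists>d\<in>carrier G.
          distinct [a, b, c, d] \<and>
          power_graph_adj G a b \<and> power_graph_adj G b c \<and> power_graph_adj G c d \<and>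
          \<not> power_graph_adj G a c \<and> \<not> power_graph_adj G b d \<and> \<not> power_graph_adj G a d"
    then obtain a b c d where abcd: "a \<in> carrier G" "b \<in> carrier G" "c \<in> carrier G" "d \<in> carrier G"
      and dist: "distinct [a, b, c, d]"
      and E: "power_graph_adj G a b" "power_graph_adj G b c" "power_graph_adj G c d"
      and N: "\<not> power_graph_adj G a c" "\<not> power_graph_adj G b d"
      by blast
    have e1: "P a b \<or> P b a" and e2: "P b c \<or> P c b" and e3: "P c d \<or> P d c"
      using E adj by blast+
    have n1: "\<not> P a c" "\<not> P c a" using N(1) adj abcd dist by auto
    have n2: "\<not> P b d" "\<not> P d b" using N(2) adj abcd dist by auto
    have "P b a \<and> P b c"
      using e1 e2 n1 ch[where a=a and b=b and c=c] tr[where u=a and v=b and w=c] tr[where u=c and v=b and w=a] abcd by blast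
    moreover have "P c b \<and> P c d"
      using e2 e3 n2 ch[where a=b and b=c and c=d] tr[where u=b and v=c and w=d] tr[where u=d and v=c and w=b] abcd by blast
    ultimately show False using tr[where u=c and v=b and w=a] abcd n1 by blast
  qed
qed

end
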